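(* Let $q$ be a prime power and let $\mathscr{L}_1,\dots,\mathscr{L}_q$ be $q$ distinct parallel classes of affine lines in $\mathbb{F}_q^5$ (so each $\mathscr{L}_i$ consists of all $q^4$ lines with a fixed direction $d_i\in\mathbb{F}_q^5\setminus\{0\}$, and the directions $d_1,\dots,d_q$ are pairwise non-parallel). Let $G_{\mathscr{L}}(q)$ be the bipartite incidence graph between $\mathscr{P}=\mathbb{F}_q^5$ and $\mathscr{L}=\bigcup_{i\in[q]}\mathscr{L}_i$ (a point $x$ is adjacent to a line $\ell$ iff $x\in\ell$). Then for every $\delta>0$ there exists $q_0(\delta)$ such that for every prime power $q\ge q_0(\delta)$ and every such choice of classes, every subgraph $H\subseteq G_{\mathscr{L}}(q)$ with at least $\delta q^6$ edges contains a copy of $C_8$. More precisely, $\operatorname{ex}(G_{\mathscr{L}}(q),C_8)=O(q^{23/4})$ as $q\to\infty$, with the implied constant independent of the choice of parallel classes.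
   Context: For graphs $G$ and $F$, $\operatorname{ex}(G,F)$ denotes the maximum number of edges in an $F$-free subgraph of $G$. $C_8$ is the cycle of length 8. *)

theory Defs
  imports Complex_Main "HOL-Algebra.Ring" "HOL-Library.FuncSet"
begin

definition points :: "('a, 'b) ring_scheme \<Rightarrow> (nat \<Rightarrow> 'a) set" where
  "points R = {0..<5} \<rightarrow>\<^sub>E carrier R"

definition zero_vec :: "('a, 'b) ring_scheme \<Rightarrow> nat \<Rightarrow> 'a" where
  "zero_vec R = restrict (\<lambda>k. \<zero>\<^bsub>R\<^esub>) {0..<5}"

definition smult_vec :: "('a, 'b) ring_scheme \<Rightarrow> 'a \<Rightarrow> (nat \<Rightarrow> 'a) \<Rightarrow> nat \<Rightarrow> 'a" where
  "smult_vec R c d = restrict (\<lambda>k. c \<otimes>\<^bsub>R\<^esub> d k) {0..<5}"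

definition affine_line :: "('a, 'b) ring_scheme \<Rightarrow> (nat \<Rightarrow> 'a) \<Rightarrow> (nat \<Rightarrow> 'a) \<Rightarrow> (nat \<Rightarrow> 'a) set" where
  "affine_line R p d = {restrict (\<lambda>k. p k \<oplus>\<^bsub>R\<^esub> t \<otimes>\<^bsub>R\<^esub> d k) {0..<5} | t. t \<in> carrier R}"

definition parallel_class :: "('a, 'b) ring_scheme \<Rightarrow> (nat \<Rightarrow> 'a) \<Rightarrow> (nat \<Rightarrow> 'a) set set" where
  "parallel_class R d = {affine_line R p d | p. p \<in> points R}"

definition valid_dirs :: "('a, 'b) ring_scheme \<Rightarrow> (nat \<Rightarrow> nat \<Rightarrow> 'a) \<Rightarrow> bool" where
  "valid_dirs R D \<longleftrightarrow>
     (\<forall>i < card (carrier R). D i \<in> points R \<and> D i \<noteq> zero_vec R) \<and>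
     (\<forall>i < card (carrier R). \<forall>j < card (carrier R). i \<noteq> j \<longrightarrow>
        \<not> (\<exists>c \<in> carrier R. D i = smult_vec R c (D j)))"

definition line_set :: "('a, 'b) ring_scheme \<Rightarrow> (nat \<Rightarrow> nat \<Rightarrow> 'a) \<Rightarrow> (nat \<Rightarrow> 'a) set set" where
  "line_set R D = (\<Union>i < card (carrier R). parallel_class R (D i))"

definition inc_edges :: "('a, 'b) ring_scheme \<Rightarrow> (nat \<Rightarrow> nat \<Rightarrow> 'a)
    \<Rightarrow> ((nat \<Rightarrow> 'a) + (nat \<Rightarrow> 'a) set) set set" where
  "inc_edges R D = {{Inl x, Inr l} | x l. x \<in> points R \<and> l \<in> line_set R D \<and> x \<in> l}"

definition has_C8 :: "'v set set \<Rightarrow> bool" where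
  "has_C8 E \<longleftrightarrow> (\<exists>v :: nat \<Rightarrow> 'v. inj_on v {0..<8} \<and> (\<forall>i < 8. {v i, v ((i + 1) mod 8)} \<in> E))"

definition ex_C8 :: "'v set set \<Rightarrow> nat" where
  "ex_C8 E = Max {card H | H. H \<subseteq> E \<and> \<not> has_C8 H}"

end

theory Submission
  imports Defs
begin

lemma sum_sq_cs:
  fixes c :: "'k \<Rightarrow> real"
  assumes "finite K"
  shows "(\<Sum>k\<in>K. c k)^2 \<le> real (card K) * (\<Sum>k\<in>K. (c k)^2)"
proof -
  have "0 \<le> (\<Sum>i\<in>K. \<Sum>j\<in>K. (c i - c j)^2)" by (intro sum_nonneg) auto
  also have "\<dots> = (\<Sum>i\<in>K. \<Sum>j\<in>K. (c i)^2 + (c j)^2 - 2 * (c i * c j))"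
    by (simp add: power2_diff algebra_simps)
  also have "\<dots> = 2 * (real (card K) * (\<Sum>k\<in>K. (c k)^2)) - 2 * (\<Sum>k\<in>K. c k)^2"
  proof -
    let ?n = "real (card K)" and ?S = "\<Sum>k\<in>K. c k" and ?Q = "\<Sum>k\<in>K. (c k)^2"
    have "\<And>i. (\<Sum>j\<in>K. (c i)^2 + (c j)^2 - 2 * (c i * c j)) = ?n * (c i)^2 + ?Q - 2 * c i * ?S"
      by (simp add: sum.distrib sum_subtractf sum_distrib_left mult.assoc)
    hence "(\<Sum>i\<in>K. \<Sum>j\<in>K. (c i)^2 + (c j)^2 - 2 * (c i * c j)) = (\<Sum>i\<in>K. ?n * (c i)^2 + ?Q - 2 * c i * ?S)"
      by simp
    also have "\<dots> = ?n * ?Q + ?n * ?Q - 2 * ?S * ?S"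
      by (simp add: sum.distrib sum_subtractf flip: sum_distrib_left sum_distrib_right)
    finally show ?thesis by (simp add: power2_eq_square)
  qed
  finally show ?thesis by simp
qed

lemma card_pairs_cs:
  assumes "finite S" "finite K" "f ` S \<subseteq> K"
  shows "real (card S)^2 \<le> real (card K) * real (card {p \<in> S \<times> S. f (fst p) = f (snd p)})"
proof -
  define A where "A k = {x\<in>S. f x = k}" for k
  have fA: "finite (A k)" for k using assms(1) by (simp add: A_def)
  have disj: "\<forall>i\<in>K. \<forall>j\<in>K. i \<noteq> j \<longrightarrow> A i \<inter> A j = {}" by (auto simp: A_def)
  have disj2: "\<forall>i\<in>K. \<forall>j\<in>K. i \<noteq> j \<longrightarrow> (A i \<times> A i) \<inter> (A j \<times> A j) = {}" by (auto simp: A_def)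
  have "S = (\<Union>k\<in>K. A k)" using assms(3) by (auto simp: A_def)
  hence cS: "card S = (\<Sum>k\<in>K. card (A k))"
    using card_UN_disjoint[OF assms(2) _ disj] fA by simp
  have "{p \<in> S \<times> S. f (fst p) = f (snd p)} = (\<Union>k\<in>K. A k \<times> A k)" using assms(3) by (auto simp: A_def)
  hence cP: "card {p \<in> S \<times> S. f (fst p) = f (snd p)} = (\<Sum>k\<in>K. card (A k \<times> A k))"
    using card_UN_disjoint[OF assms(2) _ disj2] fA by simp
  have "real (card S)^2 = (\<Sum>k\<in>K. real (card (A k)))^2" using cS by simp
  also have "\<dots> \<le> real (card K) * (\<Sum>k\<in>K. (real (card (A k)))^2)" by (rule sum_sq_cs[OF assms(2)])
  also have "(\<Sum>k\<in>K. (real (card (A k)))^2) = real (card {p \<in> S \<times> S. f (fst p) = f (snd p)})"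
    using cP by (simp add: card_cartesian_product power2_eq_square)
  finally show ?thesis .
qed

definition vline :: "('a, 'b) ring_scheme \<Rightarrow> (nat \<Rightarrow> 'a) \<Rightarrow> 'a \<Rightarrow> (nat \<Rightarrow> 'a) \<Rightarrow> nat \<Rightarrow> 'a" where
  "vline R x s d = restrict (\<lambda>k. x k \<oplus>\<^bsub>R\<^esub> s \<otimes>\<^bsub>R\<^esub> d k) {0..<5}"

lemma affine_line_vline: "affine_line R p d = {vline R p t d | t. t \<in> carrier R}"
  unfolding affine_line_def vline_def by simp

context field
begin

lemma points_mem: "x \<in> points R \<Longrightarrow> j < 5 \<Longrightarrow> x j \<in> carrier R"
  unfolding points_def by auto

lemma points_ext: "x \<in> points R \<Longrightarrow> y \<in> points R \<Longrightarrow> (\<And>j. j < 5 \<Longrightarrow> x j = y j) \<Longrightarrow> x = y"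
  unfolding points_def by (rule PiE_ext) auto

lemma vline_in[simp]: "x \<in> points R \<Longrightarrow> d \<in> points R \<Longrightarrow> s \<in> carrier R \<Longrightarrow> vline R x s d \<in> points R"
  unfolding vline_def points_def by auto

lemma vline_app: "j < 5 \<Longrightarrow> vline R x s d j = x j \<oplus> s \<otimes> d j"
  unfolding vline_def by simp

lemma vline_zero: "x \<in> points R \<Longrightarrow> d \<in> points R \<Longrightarrow> vline R x \<zero> d = x"
  by (rule points_ext) (auto simp: vline_app points_mem)

lemma vline_same: "x \<in> points R \<Longrightarrow> d \<in> points R \<Longrightarrow> s \<in> carrier R \<Longrightarrow> t \<in> carrier R \<Longrightarrow>
   vline R (vline R x s d) t d = vline R x (s \<oplus> t) d"
  by (rule points_ext) (auto simp: vline_app points_mem l_distr a_ac)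

lemma vline_comm: "x \<in> points R \<Longrightarrow> a \<in> points R \<Longrightarrow> b \<in> points R \<Longrightarrow> s \<in> carrier R \<Longrightarrow> t \<in> carrier R \<Longrightarrow>
   vline R (vline R x s a) t b = vline R (vline R x t b) s a"
  by (rule points_ext) (auto simp: vline_app points_mem a_ac)

lemma line_shift: assumes "p \<in> points R" "d \<in> points R" "s \<in> carrier R"
  shows "affine_line R (vline R p s d) d = affine_line R p d"
  unfolding affine_line_vline
proof (intro equalityI subsetI)
  fix y assume "y \<in> {vline R (vline R p s d) t d |t. t \<in> carrier R}"
  then obtain t where "t \<in> carrier R" "y = vline R (vline R p s d) t d" by auto
  thus "y \<in> {vline R p t d |t. t \<in> carrier R}" using assms by (auto simp: vline_same)
next
  fix y assume "y \<in> {vline R p t d |t. t \<in> carrier R}"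
  then obtain t where t: "t \<in> carrier R" "y = vline R p t d" by auto
  have "s \<oplus> (\<ominus> s \<oplus> t) = t" using t assms by (simp add: a_assoc[symmetric] r_neg)
  hence "y = vline R (vline R p s d) (\<ominus> s \<oplus> t) d" using t assms by (simp add: vline_same)
  thus "y \<in> {vline R (vline R p s d) t d |t. t \<in> carrier R}" using t assms by auto
qed

lemma mem_line: "y \<in> affine_line R p d \<longleftrightarrow> (\<exists>t\<in>carrier R. y = vline R p t d)"
  unfolding affine_line_vline by auto

lemma minus0: assumes "a \<in> carrier R" "b \<in> carrier R" shows "(a \<ominus> b = \<zero>) = (a = b)"
proof
  assume h: "a \<ominus> b = \<zero>"
  have "a = (a \<ominus> b) \<oplus> b" using assms by (simp add: minus_eq a_assoc l_neg)
  thus "a = b" using h assms by simp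
qed (use assms in \<open>simp add: minus_eq r_neg\<close>)

lemma scal1: assumes "X \<in> carrier R" "A \<in> carrier R" "B \<in> carrier R" "C \<in> carrier R" "D \<in> carrier R"
  and "X \<oplus> A \<oplus> B = X \<oplus> C \<oplus> D" shows "A \<ominus> C = D \<ominus> B"
proof -
  have e: "A \<oplus> B = C \<oplus> D" using assms by (simp add: a_assoc)
  have "A \<ominus> C = (A \<oplus> B) \<oplus> (\<ominus> B \<oplus> \<ominus> C)" using assms(1-5) by (simp add: minus_eq a_assoc r_neg2)
  also have "\<dots> = (C \<oplus> D) \<oplus> (\<ominus> C \<oplus> \<ominus> B)" using e assms(1-5) by (simp add: a_comm)
  also have "\<dots> = D \<ominus> B" using assms(1-5) by (simp add: minus_eq a_assoc a_lcomm[of C D] r_neg2)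
  finally show ?thesis .
qed

lemma nonzero_comp: assumes "b \<in> points R" "b \<noteq> zero_vec R" shows "\<exists>j<5. b j \<noteq> \<zero>"
proof (rule ccontr)
  assume "\<not> ?thesis"
  hence "b = zero_vec R" using assms by (intro points_ext) (auto simp: zero_vec_def points_def)
  thus False using assms by simp
qed

lemma indep:
  assumes x: "x \<in> points R" and a: "a \<in> points R" and b: "b \<in> points R"
    and sc: "\<alpha> \<in> carrier R" "\<beta> \<in> carrier R" "\<gamma> \<in> carrier R" "\<delta> \<in> carrier R"
    and bnz: "b \<noteq> zero_vec R" and np: "\<forall>c\<in>carrier R. a \<noteq> smult_vec R c b"
    and eq: "vline R (vline R x \<alpha> a) \<beta> b = vline R (vline R x \<gamma> a) \<delta> b"
  shows "\<alpha> = \<gamma> \<and> \<beta> = \<delta>"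
proof -
  have c: "(\<alpha> \<ominus> \<gamma>) \<otimes> a j = (\<delta> \<ominus> \<beta>) \<otimes> b j" if j: "j < 5" for j
  proof -
    have eqn: "x j \<oplus> \<alpha> \<otimes> a j \<oplus> \<beta> \<otimes> b j = x j \<oplus> \<gamma> \<otimes> a j \<oplus> \<delta> \<otimes> b j"
      using fun_cong[OF eq, of j] j by (simp add: vline_app)
    hence "\<alpha> \<otimes> a j \<ominus> \<gamma> \<otimes> a j = \<delta> \<otimes> b j \<ominus> \<beta> \<otimes> b j"
      by (intro scal1[OF _ _ _ _ _ eqn]) (use j x a b sc in \<open>auto simp: points_mem\<close>)
    thus ?thesis using j x a b sc by (simp add: points_mem l_minus minus_eq l_distr)
  qed
  have ag: "\<alpha> = \<gamma>"
  proof (rule ccontr)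
    assume ne: "\<alpha> \<noteq> \<gamma>"
    hence nz: "\<alpha> \<ominus> \<gamma> \<noteq> \<zero>" using sc by (metis minus0)
    have inC: "\<alpha> \<ominus> \<gamma> \<in> carrier R" using sc by simp
    define cc where "cc = m_inv R (\<alpha> \<ominus> \<gamma>) \<otimes> (\<delta> \<ominus> \<beta>)"
    have ccC: "cc \<in> carrier R" unfolding cc_def using nz inC sc by (simp add: field_Units)
    have "a = smult_vec R cc b"
    proof (rule points_ext[OF a])
      show "smult_vec R cc b \<in> points R" using ccC b by (auto simp: smult_vec_def points_def)
      fix j :: nat assume j: "j < 5"
      have "a j = m_inv R (\<alpha> \<ominus> \<gamma>) \<otimes> ((\<alpha> \<ominus> \<gamma>) \<otimes> a j)"
        using nz inC j a by (simp add: m_assoc[symmetric] field_Units points_mem)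
      also have "\<dots> = cc \<otimes> b j" using c[OF j] nz inC j b sc
        by (simp add: cc_def m_assoc field_Units points_mem)
      finally show "a j = smult_vec R cc b j" using j by (simp add: smult_vec_def)
    qed
    thus False using np ccC by blast
  qed
  obtain j where j: "j < 5" "b j \<noteq> \<zero>" using nonzero_comp[OF b bnz] by blast
  have "(\<delta> \<ominus> \<beta>) \<otimes> b j = \<zero>" using c[OF j(1)] ag sc a j by (simp add: points_mem minus_eq r_neg)
  hence "\<delta> \<ominus> \<beta> = \<zero>" using j b sc by (simp add: integral_iff points_mem)
  hence "\<beta> = \<delta>" using sc by (metis minus0)
  thus ?thesis using ag by simp
qed

definition proj :: "(nat \<Rightarrow> 'a) \<Rightarrow> nat \<Rightarrow> (nat \<Rightarrow> 'a) \<Rightarrow> nat \<Rightarrow> 'a" where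
  "proj d k x = restrict (\<lambda>j. x j \<ominus> (x k \<otimes> m_inv R (d k)) \<otimes> d j) {0..<5}"

lemma proj_in: assumes "x \<in> points R" "d \<in> points R" "k < 5" "d k \<noteq> \<zero>"
  shows "proj d k x \<in> {y \<in> points R. y k = \<zero>}"
proof -
  have iC: "m_inv R (d k) \<in> carrier R" using assms by (simp add: field_Units points_mem)
  have "proj d k x \<in> points R" unfolding proj_def points_def
    using assms iC by (auto simp: points_mem)
  moreover have "(x k \<otimes> m_inv R (d k)) \<otimes> d k = x k" using assms
    by (simp add: m_assoc field_Units points_mem)
  hence "proj d k x k = \<zero>" using assms by (simp add: proj_def points_mem minus_eq r_neg)
  ultimately show ?thesis by simp
qed

lemma proj_eq: assumes x: "x \<in> points R" and y: "y \<in> points R" and d: "d \<in> points R"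
  and k: "k < 5" "d k \<noteq> \<zero>" and eq: "proj d k x = proj d k y"
  shows "y = vline R x ((y k \<ominus> x k) \<otimes> m_inv R (d k)) d"
proof (rule points_ext[OF y])
  have iC: "m_inv R (d k) \<in> carrier R" using k d by (simp add: field_Units points_mem)
  show "vline R x ((y k \<ominus> x k) \<otimes> m_inv R (d k)) d \<in> points R" using x y d k iC by (simp add: points_mem)
  fix j :: nat assume j: "j < 5"
  have e: "x j \<ominus> (x k \<otimes> m_inv R (d k)) \<otimes> d j = y j \<ominus> (y k \<otimes> m_inv R (d k)) \<otimes> d j"
    using fun_cong[OF eq, of j] j by (simp add: proj_def)
  have C: "x j \<in> carrier R" "y j \<in> carrier R" "x k \<in> carrier R" "y k \<in> carrier R" "d j \<in> carrier R"
    using x y d j k by (auto simp: points_mem)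
  have "y j = y j \<ominus> (y k \<otimes> m_inv R (d k)) \<otimes> d j \<oplus> (y k \<otimes> m_inv R (d k)) \<otimes> d j"
    using C iC by (simp add: minus_eq a_assoc l_neg)
  also have "\<dots> = x j \<ominus> (x k \<otimes> m_inv R (d k)) \<otimes> d j \<oplus> (y k \<otimes> m_inv R (d k)) \<otimes> d j" using e by simp
  also have "\<dots> = x j \<oplus> ((y k \<ominus> x k) \<otimes> m_inv R (d k)) \<otimes> d j"
    using C iC by (simp add: minus_eq l_distr l_minus a_ac)
  finally show "y j = vline R x ((y k \<ominus> x k) \<otimes> m_inv R (d k)) d j" using j by (simp add: vline_app)
qed

lemma self_mem_line: "p \<in> points R \<Longrightarrow> d \<in> points R \<Longrightarrow> p \<in> affine_line R p d"
  unfolding mem_line by (rule bexI[of _ \<zero>]) (auto simp: vline_zero)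

lemma vd_in: "valid_dirs R D \<Longrightarrow> i < card (carrier R) \<Longrightarrow> D i \<in> points R"
  unfolding valid_dirs_def by auto
lemma vd_nz: "valid_dirs R D \<Longrightarrow> i < card (carrier R) \<Longrightarrow> D i \<noteq> zero_vec R"
  unfolding valid_dirs_def by auto
lemma vd_np: "valid_dirs R D \<Longrightarrow> i < card (carrier R) \<Longrightarrow> j < card (carrier R) \<Longrightarrow> i \<noteq> j
   \<Longrightarrow> \<forall>c\<in>carrier R. D i \<noteq> smult_vec R c (D j)"
  unfolding valid_dirs_def by blast

definition Sset :: "(nat \<Rightarrow> nat \<Rightarrow> 'a) \<Rightarrow> ((nat \<Rightarrow> 'a) + (nat \<Rightarrow> 'a) set) set set \<Rightarrow> nat \<Rightarrow> (nat \<Rightarrow> 'a) set" where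
  "Sset D H i = {x \<in> points R. {Inl x, Inr (affine_line R x (D i))} \<in> H}"

lemma C8_from_rect:
  assumes vd: "valid_dirs R D" and ab: "a < card (carrier R)" "b < card (carrier R)" "a \<noteq> b"
    and x: "x \<in> points R" and st: "s \<in> carrier R" "t \<in> carrier R" "s \<noteq> \<zero>" "t \<noteq> \<zero>"
    and m00: "vline R (vline R x \<zero> (D a)) \<zero> (D b) \<in> Sset D H a \<inter> Sset D H b"
    and ms0: "vline R (vline R x s (D a)) \<zero> (D b) \<in> Sset D H a \<inter> Sset D H b"
    and mst: "vline R (vline R x s (D a)) t (D b) \<in> Sset D H a \<inter> Sset D H b"
    and m0t: "vline R (vline R x \<zero> (D a)) t (D b) \<in> Sset D H a \<inter> Sset D H b"
  shows "has_C8 H"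
proof -
  define A where "A = D a"
  define B where "B = D b"
  have A: "A \<in> points R" and B: "B \<in> points R" using vd ab by (auto simp: A_def B_def vd_in)
  have Bnz: "B \<noteq> zero_vec R" and Anz: "A \<noteq> zero_vec R" using vd ab by (auto simp: A_def B_def vd_nz)
  have npAB: "\<forall>c\<in>carrier R. A \<noteq> smult_vec R c B" using vd_np[OF vd ab] by (simp add: A_def B_def)
  have npBA: "\<forall>c\<in>carrier R. B \<noteq> smult_vec R c A" using vd_np[OF vd ab(2,1)] ab(3) by (simp add: A_def B_def)
  define N where "N \<alpha> \<beta> = vline R (vline R x \<alpha> A) \<beta> B" for \<alpha> \<beta>
  have Nin: "\<alpha> \<in> carrier R \<Longrightarrow> \<beta> \<in> carrier R \<Longrightarrow> N \<alpha> \<beta> \<in> points R" for \<alpha> \<beta>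
    using x A B by (simp add: N_def)
  have Ninj: "N \<alpha> \<beta> = N \<gamma> \<delta> \<Longrightarrow> \<alpha> \<in> carrier R \<Longrightarrow> \<beta> \<in> carrier R \<Longrightarrow> \<gamma> \<in> carrier R \<Longrightarrow> \<delta> \<in> carrier R
      \<Longrightarrow> \<alpha> = \<gamma> \<and> \<beta> = \<delta>" for \<alpha> \<beta> \<gamma> \<delta>
    unfolding N_def by (rule indep[OF x A B _ _ _ _ Bnz npAB]) auto
  have NA: "vline R (N \<alpha> \<beta>) u A = N (\<alpha> \<oplus> u) \<beta>" if "\<alpha> \<in> carrier R" "\<beta> \<in> carrier R" "u \<in> carrier R" for \<alpha> \<beta> u
  proof -
    have "vline R (N \<alpha> \<beta>) u A = vline R (vline R (vline R x \<beta> B) \<alpha> A) u A"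
      using that x A B by (simp add: N_def vline_comm[of x A B])
    also have "\<dots> = vline R (vline R x \<beta> B) (\<alpha> \<oplus> u) A" using that x A B by (simp add: vline_same)
    also have "\<dots> = N (\<alpha> \<oplus> u) \<beta>" using that x A B by (simp add: N_def vline_comm[of x A B])
    finally show ?thesis .
  qed
  have NB: "vline R (N \<alpha> \<beta>) u B = N \<alpha> (\<beta> \<oplus> u)" if "\<alpha> \<in> carrier R" "\<beta> \<in> carrier R" "u \<in> carrier R" for \<alpha> \<beta> u
    using that x A B vline_same[of "vline R x \<alpha> A" B \<beta> u] by (simp add: N_def)
  have LA: "affine_line R (N \<alpha> \<beta>) A = affine_line R (vline R x \<beta> B) A" if "\<alpha> \<in> carrier R" "\<beta> \<in> carrier R" for \<alpha> \<beta>
  proof -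
    have "N \<alpha> \<beta> = vline R (vline R x \<beta> B) \<alpha> A" using that x A B vline_comm[of x A B \<alpha> \<beta>] by (simp add: N_def)
    thus ?thesis using that x A B by (simp add: line_shift)
  qed
  have LB: "affine_line R (N \<alpha> \<beta>) B = affine_line R (vline R x \<alpha> A) B" if "\<alpha> \<in> carrier R" "\<beta> \<in> carrier R" for \<alpha> \<beta>
    using that x A B by (simp add: N_def line_shift)
  have memA: "\<delta> = \<beta>" if "N \<gamma> \<delta> \<in> affine_line R (N \<alpha> \<beta>) A" "\<alpha> \<in> carrier R" "\<beta> \<in> carrier R" "\<gamma> \<in> carrier R" "\<delta> \<in> carrier R" for \<alpha> \<beta> \<gamma> \<delta>
  proof -
    have "\<exists>u\<in>carrier R. N \<gamma> \<delta> = vline R (N \<alpha> \<beta>) u A" using that(1) by (simp only: mem_line)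
    then obtain u where u: "u \<in> carrier R" "N \<gamma> \<delta> = vline R (N \<alpha> \<beta>) u A" by blast
    have "N \<gamma> \<delta> = N (\<alpha> \<oplus> u) \<beta>" using u(2) NA[OF that(2,3) u(1)] by (rule trans)
    hence "\<gamma> = \<alpha> \<oplus> u \<and> \<delta> = \<beta>" by (rule Ninj) (use that(2-5) u(1) in simp_all)
    thus ?thesis by simp
  qed
  have memB: "\<gamma> = \<alpha>" if "N \<gamma> \<delta> \<in> affine_line R (N \<alpha> \<beta>) B" "\<alpha> \<in> carrier R" "\<beta> \<in> carrier R" "\<gamma> \<in> carrier R" "\<delta> \<in> carrier R" for \<alpha> \<beta> \<gamma> \<delta>
  proof -
    have "\<exists>u\<in>carrier R. N \<gamma> \<delta> = vline R (N \<alpha> \<beta>) u B" using that(1) by (simp only: mem_line)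
    then obtain u where u: "u \<in> carrier R" "N \<gamma> \<delta> = vline R (N \<alpha> \<beta>) u B" by blast
    have "N \<gamma> \<delta> = N \<alpha> (\<beta> \<oplus> u)" using u(2) NB[OF that(2,3) u(1)] by (rule trans)
    hence "\<gamma> = \<alpha> \<and> \<delta> = \<beta> \<oplus> u" by (rule Ninj) (use that(2-5) u(1) in simp_all)
    thus ?thesis by simp
  qed
  have selfN: "N \<alpha> \<beta> \<in> affine_line R (N \<alpha> \<beta>) d" if "\<alpha> \<in> carrier R" "\<beta> \<in> carrier R" "d \<in> points R" for \<alpha> \<beta> d
    using self_mem_line Nin that by blast
  have z: "\<zero> \<in> carrier R" by simp
  have E0: "{Inl (N \<alpha> \<beta>), Inr (affine_line R (N \<alpha> \<beta>) A)} \<in> H \<and> {Inl (N \<alpha> \<beta>), Inr (affine_line R (N \<alpha> \<beta>) B)} \<in> H"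
    if "N \<alpha> \<beta> \<in> Sset D H a \<inter> Sset D H b" for \<alpha> \<beta>
    using that by (simp add: Sset_def A_def B_def)
  have E: "{Inl (N \<alpha> \<beta>), Inr (affine_line R (N \<alpha> \<beta>) A)} \<in> H \<and> {Inl (N \<alpha> \<beta>), Inr (affine_line R (N \<alpha> \<beta>) B)} \<in> H"
    if "(\<alpha>, \<beta>) \<in> {(\<zero>,\<zero>), (s,\<zero>), (s,t), (\<zero>,t)}" for \<alpha> \<beta>
  proof (rule E0)
    have "N \<zero> \<zero> \<in> Sset D H a \<inter> Sset D H b" "N s \<zero> \<in> Sset D H a \<inter> Sset D H b"
      "N s t \<in> Sset D H a \<inter> Sset D H b" "N \<zero> t \<in> Sset D H a \<inter> Sset D H b"
      using m00 ms0 mst m0t unfolding N_def A_def B_def by auto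
    thus "N \<alpha> \<beta> \<in> Sset D H a \<inter> Sset D H b" using that by auto
  qed
  define v where "v = (!) [Inl (N \<zero> \<zero>), Inr (affine_line R (N \<zero> \<zero>) A), Inl (N s \<zero>), Inr (affine_line R (N s \<zero>) B),
     Inl (N s t), Inr (affine_line R (N s t) A), Inl (N \<zero> t), Inr (affine_line R (N \<zero> t) B)]"
  have l1: "affine_line R (N s \<zero>) A = affine_line R (N \<zero> \<zero>) A" using LA st by simp
  have l2: "affine_line R (N s t) B = affine_line R (N s \<zero>) B" using LB st by simp
  have l3: "affine_line R (N \<zero> t) A = affine_line R (N s t) A" using LA st by simp
  have l4: "affine_line R (N \<zero> \<zero>) B = affine_line R (N \<zero> t) B" using LB st by simp
  have edges: "\<forall>i<8. {v i, v ((i + 1) mod 8)} \<in> H"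
  proof (intro allI impI)
    fix i :: nat assume "i < 8"
    hence "i = 0 \<or> i = 1 \<or> i = 2 \<or> i = 3 \<or> i = 4 \<or> i = 5 \<or> i = 6 \<or> i = 7" by arith
    thus "{v i, v ((i + 1) mod 8)} \<in> H"
      using E[of \<zero> \<zero>] E[of s \<zero>] E[of s t] E[of \<zero> t] l1 l2 l3 l4
      by (elim disjE) (simp_all add: v_def insert_commute)
  qed
  have pd: "N \<zero> \<zero> \<noteq> N s \<zero>" "N \<zero> \<zero> \<noteq> N s t" "N \<zero> \<zero> \<noteq> N \<zero> t" "N s \<zero> \<noteq> N s t" "N s \<zero> \<noteq> N \<zero> t" "N s t \<noteq> N \<zero> t"
    using Ninj[of \<zero> \<zero> s \<zero>] Ninj[of \<zero> \<zero> s t] Ninj[of \<zero> \<zero> \<zero> t] Ninj[of s \<zero> s t]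
      Ninj[of s \<zero> \<zero> t] Ninj[of s t \<zero> t] st z by auto
  have ld1: "affine_line R (N \<zero> \<zero>) A \<noteq> affine_line R (N s t) A"
  proof
    assume eq: "affine_line R (N \<zero> \<zero>) A = affine_line R (N s t) A"
    have "N \<zero> \<zero> \<in> affine_line R (N s t) A" using selfN[OF z z A] eq by simp
    from memA[OF this st(1,2) z z] show False using st by simp
  qed
  have ld2: "affine_line R (N s \<zero>) B \<noteq> affine_line R (N \<zero> t) B"
  proof
    assume eq: "affine_line R (N s \<zero>) B = affine_line R (N \<zero> t) B"
    have "N s \<zero> \<in> affine_line R (N \<zero> t) B" using selfN[OF st(1) z B] eq by simp
    from memB[OF this z st(2) st(1) z] show False using st by simp
  qed
  have ld3: "affine_line R (N \<zero> \<zero>) A \<noteq> affine_line R (N s \<zero>) B"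
  proof
    assume eq: "affine_line R (N \<zero> \<zero>) A = affine_line R (N s \<zero>) B"
    have "N \<zero> \<zero> \<in> affine_line R (N s \<zero>) B" using selfN[OF z z A] eq by simp
    from memB[OF this st(1) z z z] show False using st by simp
  qed
  have ld4: "affine_line R (N \<zero> \<zero>) A \<noteq> affine_line R (N \<zero> t) B"
  proof
    assume eq: "affine_line R (N \<zero> \<zero>) A = affine_line R (N \<zero> t) B"
    have "N s \<zero> \<in> affine_line R (N \<zero> t) B" using selfN[OF st(1) z A] l1 eq by simp
    from memB[OF this z st(2) st(1) z] show False using st by simp
  qed
  have ld5: "affine_line R (N s t) A \<noteq> affine_line R (N s \<zero>) B"
  proof
    assume eq: "affine_line R (N s t) A = affine_line R (N s \<zero>) B"
    have "N \<zero> t \<in> affine_line R (N s \<zero>) B" using selfN[OF z st(2) A] l3 eq by simp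
    from memB[OF this st(1) z z st(2)] show False using st by simp
  qed
  have ld6: "affine_line R (N s t) A \<noteq> affine_line R (N \<zero> t) B"
  proof
    assume eq: "affine_line R (N s t) A = affine_line R (N \<zero> t) B"
    have "N s t \<in> affine_line R (N \<zero> t) B" using selfN[OF st(1,2) A] eq by simp
    from memB[OF this z st(2) st(1,2)] show False using st by simp
  qed
  have "distinct [Inl (N \<zero> \<zero>), Inr (affine_line R (N \<zero> \<zero>) A), Inl (N s \<zero>), Inr (affine_line R (N s \<zero>) B),
     Inl (N s t), Inr (affine_line R (N s t) A), Inl (N \<zero> t), Inr (affine_line R (N \<zero> t) B)]"
    using pd ld1 ld2 ld3 ld4 ld5 ld6 by auto
  hence "inj_on v {0..<8}" unfolding v_def by (rule inj_on_nth) auto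
  thus ?thesis unfolding has_C8_def using edges by blast
qed

end

context field
begin

lemma card_hyper: assumes fin: "finite (carrier R)" and k: "k < 5"
  shows "card {y \<in> points R. y k = c} \<le> card (carrier R) ^ 4"
proof -
  let ?I = "{0..<5::nat} - {k}"
  have cI: "card ?I = 4" using k by simp
  have "inj_on (\<lambda>y. restrict y ?I) {y \<in> points R. y k = c}"
  proof (rule inj_onI)
    fix y y' assume y: "y \<in> {y \<in> points R. y k = c}" and y': "y' \<in> {y \<in> points R. y k = c}"
      and e: "restrict y ?I = restrict y' ?I"
    show "y = y'"
    proof (rule points_ext)
      show "y \<in> points R" "y' \<in> points R" using y y' by auto
      fix j :: nat assume j: "j < 5"
      show "y j = y' j"
      proof (cases "j = k")
        case True thus ?thesis using y y' by simp
      next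
        case False thus ?thesis using fun_cong[OF e, of j] j by simp
      qed
    qed
  qed
  moreover have "(\<lambda>y. restrict y ?I) ` {y \<in> points R. y k = c} \<subseteq> PiE ?I (\<lambda>_. carrier R)"
    by (auto simp: points_def PiE_iff split: if_splits)
  ultimately have "card {y \<in> points R. y k = c} \<le> card (PiE ?I (\<lambda>_. carrier R))"
    using fin by (intro card_inj_on_le) (auto intro: finite_PiE)
  also have "\<dots> = card (carrier R) ^ 4" using cI by (simp add: card_PiE)
  finally show ?thesis .
qed

lemma card_points: "card (points R) = card (carrier R) ^ 5"
  unfolding points_def by (simp add: card_PiE)

lemma finite_points: "finite (carrier R) \<Longrightarrow> finite (points R)"
  unfolding points_def by (auto intro: finite_PiE)

lemma pair_bound:
  assumes fin: "finite (carrier R)" and vd: "valid_dirs R D"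
    and ab: "a < card (carrier R)" "b < card (carrier R)" "a \<noteq> b" and nc: "\<not> has_C8 H"
  shows "real (card (Sset D H a \<inter> Sset D H b))^2
     \<le> real (card (carrier R))^4 * (real (card (Sset D H a \<inter> Sset D H b)) + real (card (carrier R))^5)"
proof -
  let ?q = "card (carrier R)"
  define S where "S = Sset D H a \<inter> Sset D H b"
  define A where "A = D a"
  define B where "B = D b"
  have A: "A \<in> points R" and B: "B \<in> points R" using vd ab by (auto simp: A_def B_def vd_in)
  obtain ka where ka: "ka < 5" "A ka \<noteq> \<zero>" using nonzero_comp[OF A] vd ab by (auto simp: A_def vd_nz)
  obtain kb where kb: "kb < 5" "B kb \<noteq> \<zero>" using nonzero_comp[OF B] vd ab by (auto simp: B_def vd_nz)
  have SV: "S \<subseteq> points R" by (auto simp: S_def Sset_def)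
  have fS: "finite S" using SV finite_points[OF fin] finite_subset by blast
  define g where "g = proj A ka"
  define KA where "KA = {y \<in> points R. y ka = \<zero>}"
  define KB where "KB = {y \<in> points R. y kb = \<zero>}"
  have fKA: "finite KA" "finite KB" using finite_points[OF fin] by (auto simp: KA_def KB_def)
  have gS: "g ` S \<subseteq> KA" using SV proj_in[OF _ A ka] by (auto simp: g_def KA_def)
  define Pr where "Pr = {p \<in> S \<times> S. g (fst p) = g (snd p)}"
  have cs: "real (card S)^2 \<le> real (card KA) * real (card Pr)"
    unfolding Pr_def by (rule card_pairs_cs[OF fS fKA(1) gS])
  define Off where "Off = {p \<in> Pr. fst p \<noteq> snd p}"
  have PrO: "Pr \<subseteq> (\<lambda>x. (x, x)) ` S \<union> Off" by (auto simp: Pr_def Off_def)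
  define \<phi> where "\<phi> p = (proj B kb (fst p), (snd p ka \<ominus> fst p ka) \<otimes> m_inv R (A ka))" for p
  have iA: "m_inv R (A ka) \<in> carrier R" using ka A by (simp add: field_Units points_mem)
  have iB: "m_inv R (B kb) \<in> carrier R" using kb B by (simp add: field_Units points_mem)
  have phiO: "\<phi> ` Off \<subseteq> KB \<times> carrier R"
  proof (rule image_subsetI)
    fix p assume "p \<in> Off"
    hence V: "fst p \<in> points R" "snd p \<in> points R" using SV by (auto simp: Off_def Pr_def)
    have "fst p ka \<in> carrier R" "snd p ka \<in> carrier R" using V ka by (auto simp: points_mem)
    thus "\<phi> p \<in> KB \<times> carrier R" using proj_in[OF V(1) B kb] iA by (simp add: \<phi>_def KB_def)
  qed
  have inj: "inj_on \<phi> Off"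
  proof (rule inj_onI)
    fix p p' assume p: "p \<in> Off" and p': "p' \<in> Off" and e: "\<phi> p = \<phi> p'"
    obtain x y where pxy: "p = (x, y)" by (cases p)
    obtain x' y' where pxy': "p' = (x', y')" by (cases p')
    have xy: "x \<in> S" "y \<in> S" "x \<noteq> y" "g x = g y" using p pxy by (auto simp: Off_def Pr_def)
    have xy': "x' \<in> S" "y' \<in> S" "x' \<noteq> y'" "g x' = g y'" using p' pxy' by (auto simp: Off_def Pr_def)
    have V: "x \<in> points R" "y \<in> points R" "x' \<in> points R" "y' \<in> points R" using xy xy' SV by auto
    define s where "s = (y ka \<ominus> x ka) \<otimes> m_inv R (A ka)"
    define t where "t = (x' kb \<ominus> x kb) \<otimes> m_inv R (B kb)"
    have sC: "s \<in> carrier R" and tC: "t \<in> carrier R" using V ka kb iA iB by (auto simp: s_def t_def points_mem)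
    have ys: "y = vline R x s A" using proj_eq[OF V(1,2) A ka] xy(4) by (simp add: g_def s_def)
    have "y' = vline R x' ((y' ka \<ominus> x' ka) \<otimes> m_inv R (A ka)) A" using proj_eq[OF V(3,4) A ka] xy'(4) by (simp add: g_def)
    hence ys': "y' = vline R x' s A" using e pxy pxy' by (simp add: \<phi>_def s_def)
    have xt: "x' = vline R x t B" using proj_eq[OF V(1,3) B kb] e pxy pxy' by (simp add: \<phi>_def t_def)
    show "p = p'"
    proof (cases "t = \<zero>")
      case True
      hence "x' = x" using xt V B by (simp add: vline_zero)
      thus ?thesis using ys ys' pxy pxy' by simp
    next
      case False
      have s0: "s \<noteq> \<zero>" using ys xy(3) V A by (auto simp: vline_zero)
      have "has_C8 H"
      proof (rule C8_from_rect[OF vd ab V(1) sC tC s0 False])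
        show "vline R (vline R x \<zero> (D a)) \<zero> (D b) \<in> Sset D H a \<inter> Sset D H b"
          using xy V A B by (simp add: vline_zero S_def A_def[symmetric] B_def[symmetric])
        show "vline R (vline R x s (D a)) \<zero> (D b) \<in> Sset D H a \<inter> Sset D H b"
          using xy V A B sC ys by (simp add: vline_zero S_def A_def[symmetric] B_def[symmetric])
        show "vline R (vline R x \<zero> (D a)) t (D b) \<in> Sset D H a \<inter> Sset D H b"
          using xy' V A B xt by (simp add: vline_zero S_def A_def[symmetric] B_def[symmetric])
        have "vline R (vline R x s A) t B = vline R (vline R x t B) s A" by (rule vline_comm[OF V(1) A B sC tC])
        also have "\<dots> = y'" using xt ys' by simp
        finally have "vline R (vline R x s A) t B = y'" .
        thus "vline R (vline R x s (D a)) t (D b) \<in> Sset D H a \<inter> Sset D H b"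
          using xy' by (simp add: S_def A_def[symmetric] B_def[symmetric])
      qed
      thus ?thesis using nc by simp
    qed
  qed
  have "card Off \<le> card (KB \<times> carrier R)"
    using inj phiO fKA fin by (intro card_inj_on_le) auto
  also have "\<dots> = card KB * ?q" by (simp add: card_cartesian_product)
  also have "\<dots> \<le> ?q ^ 4 * ?q" using card_hyper[OF fin kb(1)] by (simp add: KB_def)
  also have "?q ^ 4 * ?q = ?q ^ 5" by (simp add: eval_nat_numeral)
  finally have cO: "card Off \<le> ?q ^ 5" .
  have fO: "finite Off" using fS by (auto simp: Off_def Pr_def)
  have "card Pr \<le> card ((\<lambda>x. (x, x)) ` S \<union> Off)" using PrO fS fO by (intro card_mono) auto
  also have "\<dots> \<le> card ((\<lambda>x. (x, x)) ` S) + card Off" by (rule card_Un_le)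
  also have "\<dots> \<le> card S + card Off" using card_image_le[OF fS] by simp
  finally have cPr: "card Pr \<le> card S + ?q ^ 5" using cO by simp
  have cKA: "card KA \<le> ?q ^ 4" using card_hyper[OF fin ka(1)] by (simp add: KA_def)
  have "real (card S)^2 \<le> real (card KA) * real (card Pr)" by (rule cs)
  also have "\<dots> \<le> real ?q ^ 4 * (real (card S) + real ?q ^ 5)"
  proof (rule mult_mono)
    show "real (card KA) \<le> real ?q ^ 4" using cKA by (metis of_nat_le_iff of_nat_power)
    show "real (card Pr) \<le> real (card S) + real ?q ^ 5" using cPr by (metis of_nat_add of_nat_le_iff of_nat_power)
  qed auto
  finally show ?thesis by (simp add: S_def)
qed

end

lemma real_bound_step:
  fixes E u :: real
  assumes u: "1 \<le> u" and E0: "0 \<le> E" and Eq: "E \<le> u ^ 24"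
    and ineq: "E ^ 2 \<le> u ^ 20 * (E + 2 * u ^ 26)"
  shows "E \<le> 2 * u ^ 23"
proof -
  have "u ^ 20 * E \<le> u ^ 20 * u ^ 24" using Eq u by (intro mult_left_mono) auto
  also have "\<dots> = u ^ 44" by (simp add: power_add[symmetric])
  also have "\<dots> \<le> u ^ 46" using u by (intro power_increasing) auto
  finally have a: "u ^ 20 * E \<le> u ^ 46" .
  have "E ^ 2 \<le> u ^ 20 * E + 2 * (u ^ 20 * u ^ 26)" using ineq by (simp add: algebra_simps)
  also have "u ^ 20 * u ^ 26 = u ^ 46" by (simp add: power_add[symmetric])
  finally have "E ^ 2 \<le> 3 * u ^ 46" using a by simp
  also have "\<dots> \<le> (2 * u ^ 23) ^ 2" using u by (simp add: power_mult_distrib power_mult[symmetric])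
  finally show ?thesis by (rule power2_le_imp_le) (use u in simp)
qed

lemma real_bound_pair:
  fixes m u :: real
  assumes u: "1 \<le> u" and m0: "0 \<le> m" and mq: "m \<le> u ^ 20"
    and ineq: "m ^ 2 \<le> u ^ 16 * (m + u ^ 20)"
  shows "m \<le> 2 * u ^ 18"
proof -
  have "m ^ 2 \<le> u ^ 16 * (u ^ 20 + u ^ 20)" using ineq mq u by (smt (verit) mult_left_mono zero_le_power)
  also have "\<dots> = 2 * u ^ 36" by (simp add: power_add[symmetric])
  also have "\<dots> \<le> (2 * u ^ 18) ^ 2" using u by (simp add: power_mult_distrib power_mult[symmetric])
  finally show ?thesis by (rule power2_le_imp_le) (use u in simp)
qed

context field
begin

lemma main_bound:
  assumes fin: "finite (carrier R)" and vd: "valid_dirs R D"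
    and HE: "H \<subseteq> inc_edges R D" and nc: "\<not> has_C8 H"
  shows "real (card H) \<le> 2 * real (card (carrier R)) powr (23/4)"
proof -
  let ?q = "card (carrier R)"
  define Q where "Q = real ?q"
  have q1: "1 \<le> ?q" using fin zero_closed by (metis card_0_eq empty_iff less_one not_le)
  hence Q1: "1 \<le> Q" by (simp add: Q_def)
  define u where "u = Q powr (1/4)"
  have u1: "1 \<le> u" using Q1 by (simp add: u_def ge_one_powr_ge_zero)
  have upow: "u ^ n = Q powr (real n / 4)" for n
    using Q1 by (simp add: u_def powr_power)
  have Qu: "Q = u ^ 4" using upow[of 4] Q1 by simp
  define P where "P = Sigma {..<?q} (Sset D H)"
  have finV: "finite (points R)" by (rule finite_points[OF fin])
  have PV: "P \<subseteq> {..<?q} \<times> points R" by (auto simp: P_def Sset_def)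
  have finP: "finite P" using PV finV finite_subset by blast
  define \<psi> where "\<psi> p = {Inl (snd p), Inr (affine_line R (snd p) (D (fst p)))}" for p
  have Hcov: "H \<subseteq> \<psi> ` P"
  proof
    fix e assume eH: "e \<in> H"
    then obtain x l where e: "e = {Inl x, Inr l}" and x: "x \<in> points R" and l: "l \<in> line_set R D"
      and xl: "x \<in> l" using HE by (auto simp: inc_edges_def)
    obtain i p where i: "i < ?q" and p: "p \<in> points R" and lp: "l = affine_line R p (D i)"
      using l by (auto simp: line_set_def parallel_class_def)
    have Di: "D i \<in> points R" using vd i by (rule vd_in)
    obtain u where u: "u \<in> carrier R" "x = vline R p u (D i)" using xl lp mem_line by blast
    have "affine_line R x (D i) = l" using u p Di lp by (simp add: line_shift)
    hence "e = \<psi> (i, x)" using e by (simp add: \<psi>_def)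
    moreover have "(i, x) \<in> P" using i x eH e \<open>affine_line R x (D i) = l\<close> by (simp add: P_def Sset_def)
    ultimately show "e \<in> \<psi> ` P" by blast
  qed
  have cH: "card H \<le> card P"
    using card_mono[OF finite_imageI[OF finP] Hcov] card_image_le[OF finP, of \<psi>] by linarith
  have cP: "card P \<le> ?q * ?q ^ 5"
    using card_mono[OF _ PV] finV by (simp add: card_cartesian_product card_points)
  define T where "T = {pp \<in> P \<times> P. snd (fst pp) = snd (snd pp)}"
  have sndP: "snd ` P \<subseteq> points R" using PV by auto
  have cs: "real (card P)^2 \<le> real (card (points R)) * real (card T)"
    unfolding T_def by (rule card_pairs_cs[OF finP finV sndP])
  define Pab where "Pab = {ab \<in> {..<?q} \<times> {..<?q}. fst ab \<noteq> snd ab}"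
  define F where "F ab = (\<lambda>x. ((fst ab, x), (snd ab, x))) ` (Sset D H (fst ab) \<inter> Sset D H (snd ab))" for ab
  have TU: "T \<subseteq> (\<lambda>p. (p, p)) ` P \<union> (\<Union>ab\<in>Pab. F ab)"
  proof
    fix pp assume "pp \<in> T"
    then obtain a x b y where pp: "pp = ((a, x), (b, y))" and ax: "(a, x) \<in> P" and "(b, y) \<in> P" and xy: "x = y"
      by (auto simp: T_def)
    show "pp \<in> (\<lambda>p. (p, p)) ` P \<union> (\<Union>ab\<in>Pab. F ab)"
    proof (cases "a = b")
      case True thus ?thesis using pp ax xy by auto
    next
      case False
      hence "(a, b) \<in> Pab" "pp \<in> F (a, b)" using pp ax \<open>(b, y) \<in> P\<close> xy by (auto simp: Pab_def P_def F_def)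
      thus ?thesis by blast
    qed
  qed
  have finPab: "finite Pab" by (simp add: Pab_def)
  have finF: "finite (F ab)" for ab
    using finV by (auto simp: F_def Sset_def)
  have mb: "real (card (F ab)) \<le> 2 * u ^ 18" if ab: "ab \<in> Pab" for ab
  proof -
    obtain a b where abd: "ab = (a, b)" by (cases ab)
    have a: "a < ?q" "b < ?q" "a \<noteq> b" using ab abd by (auto simp: Pab_def)
    define m where "m = real (card (Sset D H a \<inter> Sset D H b))"
    have fS: "finite (Sset D H a \<inter> Sset D H b)" using finV by (auto simp: Sset_def)
    have cF: "card (F ab) \<le> card (Sset D H a \<inter> Sset D H b)" unfolding F_def abd fst_conv snd_conv
      by (rule card_image_le[OF fS])
    have "card (Sset D H a \<inter> Sset D H b) \<le> card (points R)"
      using finV by (intro card_mono) (auto simp: Sset_def)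
    hence "m \<le> Q ^ 5" by (simp add: m_def card_points Q_def)
    hence mq: "m \<le> u ^ 20" by (simp add: Qu power_mult[symmetric])
    have "m ^ 2 \<le> Q ^ 4 * (m + Q ^ 5)" using pair_bound[OF fin vd a nc] by (simp add: m_def Q_def)
    hence "m ^ 2 \<le> u ^ 16 * (m + u ^ 20)" by (simp add: Qu power_mult[symmetric])
    hence "m \<le> 2 * u ^ 18" using real_bound_pair[OF u1 _ mq] by (simp add: m_def)
    thus ?thesis using cF by (simp add: m_def)
  qed
  have "card T \<le> card ((\<lambda>p. (p, p)) ` P \<union> (\<Union>ab\<in>Pab. F ab))"
    using TU finP finPab finF by (intro card_mono) auto
  also have "\<dots> \<le> card ((\<lambda>p. (p, p)) ` P) + card (\<Union>ab\<in>Pab. F ab)" by (rule card_Un_le)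
  also have "\<dots> \<le> card P + (\<Sum>ab\<in>Pab. card (F ab))"
    using card_image_le[OF finP, of "\<lambda>p. (p, p)"] card_UN_le[OF finPab, of F] by linarith
  finally have cT: "real (card T) \<le> real (card P) + (\<Sum>ab\<in>Pab. real (card (F ab)))"
    by (metis of_nat_add of_nat_le_iff of_nat_sum)
  have "(\<Sum>ab\<in>Pab. real (card (F ab))) \<le> (\<Sum>ab\<in>Pab. 2 * u ^ 18)" by (rule sum_mono) (rule mb)
  also have "\<dots> = real (card Pab) * (2 * u ^ 18)" by simp
  also have "\<dots> \<le> Q ^ 2 * (2 * u ^ 18)"
  proof (rule mult_right_mono)
    have "card Pab \<le> card ({..<?q} \<times> {..<?q})" by (rule card_mono) (auto simp: Pab_def)
    hence "card Pab \<le> ?q ^ 2" by (simp add: card_cartesian_product power2_eq_square)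
    thus "real (card Pab) \<le> Q ^ 2" unfolding Q_def by (metis of_nat_le_iff of_nat_power)
  qed (use u1 in simp)
  also have "\<dots> = 2 * u ^ 26" by (simp add: Qu power_mult[symmetric] power_add[symmetric])
  finally have sb: "(\<Sum>ab\<in>Pab. real (card (F ab))) \<le> 2 * u ^ 26" .
  define E where "E = real (card P)"
  have "E ^ 2 \<le> Q ^ 5 * (E + 2 * u ^ 26)"
  proof -
    have "E ^ 2 \<le> real (card (points R)) * real (card T)" using cs by (simp add: E_def)
    also have "\<dots> \<le> Q ^ 5 * (E + 2 * u ^ 26)"
      using cT sb by (intro mult_mono) (auto simp: card_points Q_def E_def)
    finally show ?thesis .
  qed
  hence i1: "E ^ 2 \<le> u ^ 20 * (E + 2 * u ^ 26)" by (simp add: Qu power_mult[symmetric])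
  have "E \<le> Q * Q ^ 5" using cP by (simp add: E_def Q_def) (metis of_nat_le_iff of_nat_mult of_nat_power)
  hence Eq: "E \<le> u ^ 24" by (simp add: Qu power_mult[symmetric] power_add[symmetric])
  have "E \<le> 2 * u ^ 23" by (rule real_bound_step[OF u1 _ Eq i1]) (simp add: E_def)
  moreover have "u ^ 23 = Q powr (23/4)" using upow[of 23] by simp
  ultimately show ?thesis using cH by (simp add: E_def Q_def)
qed

end

lemma finite_inc_edges: assumes fin: "finite (carrier R)" shows "finite (inc_edges R D)"
proof -
  have fV: "finite (points R)" unfolding points_def using fin by (auto intro: finite_PiE)
  have "line_set R D = (\<Union>i<card (carrier R). (\<lambda>p. affine_line R p (D i)) ` points R)"
    unfolding line_set_def parallel_class_def by auto
  hence fL: "finite (line_set R D)" using fV by simp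
  have "inc_edges R D \<subseteq> Pow (Inl ` points R \<union> Inr ` line_set R D)"
    unfolding inc_edges_def by auto
  moreover have "finite (Pow (Inl ` points R \<union> Inr ` line_set R D))" using fV fL by simp
  ultimately show ?thesis by (rule finite_subset)
qed

lemma not_C8_empty: "\<not> has_C8 {}"
proof
  assume "has_C8 {}"
  then obtain v :: "nat \<Rightarrow> 'a" where "\<forall>i < (8::nat). {v i, v ((i + 1) mod 8)} \<in> ({} :: 'a set set)" unfolding has_C8_def by blast
  moreover have "(0::nat) < 8" by simp
  ultimately show False by blast
qed

lemma ex_bound:
  assumes fR: "field R" and fin: "finite (carrier R)" and vd: "valid_dirs R D"
  shows "real (ex_C8 (inc_edges R D)) \<le> 2 * real (card (carrier R)) powr (23/4)"
proof -
  let ?S = "{card H | H. H \<subseteq> inc_edges R D \<and> \<not> has_C8 H}"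
  have "?S \<subseteq> card ` Pow (inc_edges R D)" by auto
  moreover have "finite (card ` Pow (inc_edges R D))" using finite_inc_edges[OF fin] by simp
  ultimately have finS: "finite ?S" by (rule finite_subset)
  have "0 \<in> ?S" using not_C8_empty by force
  hence "?S \<noteq> {}" by blast
  hence "Max ?S \<in> ?S" by (rule Max_in[OF finS])
  then obtain H where H: "H \<subseteq> inc_edges R D" "\<not> has_C8 H" "Max ?S = card H" by auto
  have "real (card H) \<le> 2 * real (card (carrier R)) powr (23/4)"
    by (rule field.main_bound[OF fR fin vd H(1,2)])
  thus ?thesis using H(3) by (simp add: ex_C8_def)
qed

theorem theorem3p1:
  shows "(\<forall>\<delta>::real. \<delta> > 0 \<longrightarrow> (\<exists>q0::nat. \<forall>(R :: nat ring) D H.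
            field R \<and> finite (carrier R) \<and> card (carrier R) \<ge> q0 \<and> valid_dirs R D \<and>
            H \<subseteq> inc_edges R D \<and> real (card H) \<ge> \<delta> * real (card (carrier R)) ^ 6
            \<longrightarrow> has_C8 H))
       \<and> (\<exists>(C::real) (q1::nat). \<forall>(R :: nat ring) D.
            field R \<and> finite (carrier R) \<and> card (carrier R) \<ge> q1 \<and> valid_dirs R D
            \<longrightarrow> real (ex_C8 (inc_edges R D)) \<le> C * real (card (carrier R)) powr (23/4))"
proof (intro conjI allI impI)
  fix \<delta> :: real assume d: "\<delta> > 0"
  define q0 where "q0 = nat \<lceil>(2 / \<delta>) ^ 4\<rceil> + 1"
  show "\<exists>q0::nat. \<forall>(R :: nat ring) D H.
            field R \<and> finite (carrier R) \<and> card (carrier R) \<ge> q0 \<and> valid_dirs R D \<and>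
            H \<subseteq> inc_edges R D \<and> real (card H) \<ge> \<delta> * real (card (carrier R)) ^ 6
            \<longrightarrow> has_C8 H"
  proof (rule exI[of _ q0], intro allI impI)
    fix R :: "nat ring" and D H
    assume a: "field R \<and> finite (carrier R) \<and> card (carrier R) \<ge> q0 \<and> valid_dirs R D \<and>
            H \<subseteq> inc_edges R D \<and> real (card H) \<ge> \<delta> * real (card (carrier R)) ^ 6"
    show "has_C8 H"
    proof (rule ccontr)
      assume nc: "\<not> has_C8 H"
      define Q where "Q = real (card (carrier R))"
      have b: "real (card H) \<le> 2 * Q powr (23/4)"
        unfolding Q_def using a nc by (intro field.main_bound) auto
      have Qq0: "real q0 \<le> Q" using a by (simp add: Q_def)
      have q0gt: "(2 / \<delta>) ^ 4 < real q0" unfolding q0_def by linarith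
      have "0 \<le> (2 / \<delta>) ^ 4" using d by simp
      hence Qpos: "0 < Q" using Qq0 q0gt by linarith
      define u where "u = Q powr (1/4)"
      have upos: "0 < u" using Qpos by (simp add: u_def)
      have upow: "u ^ n = Q powr (real n / 4)" for n using Qpos by (simp add: u_def powr_power)
      have "\<delta> * u ^ 24 \<le> 2 * u ^ 23"
      proof -
        have "\<delta> * u ^ 24 = \<delta> * Q ^ 6" using upow[of 24] Qpos by (simp add: powr_realpow)
        also have "\<dots> \<le> real (card H)" using a by (simp add: Q_def)
        also have "\<dots> \<le> 2 * u ^ 23" using b upow[of 23] by simp
        finally show ?thesis .
      qed
      moreover have "u ^ 24 = u * u ^ 23" using power_add[of u 1 23] by simp
      ultimately have "(\<delta> * u) * u ^ 23 \<le> 2 * u ^ 23" by (simp add: mult.assoc)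
      hence "\<delta> * u \<le> 2" using upos by (simp add: mult_le_cancel_right)
      hence "u \<le> 2 / \<delta>" using d by (simp add: field_simps mult.commute)
      hence "u ^ 4 \<le> (2 / \<delta>) ^ 4" using upos by (intro power_mono) auto
      moreover have "u ^ 4 = Q" using upow[of 4] Qpos by simp
      ultimately show False using Qq0 q0gt by linarith
    qed
  qed
next
  show "\<exists>(C::real) (q1::nat). \<forall>(R :: nat ring) D.
            field R \<and> finite (carrier R) \<and> card (carrier R) \<ge> q1 \<and> valid_dirs R D
            \<longrightarrow> real (ex_C8 (inc_edges R D)) \<le> C * real (card (carrier R)) powr (23/4)"
    using ex_bound by blast
qed

end
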